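(* Let $(X,d),(Y,\rho)\in\mathfrak U$. Then $X\cong Y$ if and only if there exists a bijection $F:X\to Y$ that preserves balls.
   Context: $\operatorname{Sp}(X)=\{d(x,y):x\neq y\}$; $\mathfrak U$ is the class of finite ultrametric spaces $X$ with $|\operatorname{Sp}(X)|=|X|-1$. For a metric space $X$ and $t\in X$: $B_r(t)=\{x:d(x,t)\le r\}$, $\operatorname{Sp}_t(X)=\{d(x,t):x\neq t\}$, $\mathbf B_X=\{B_r(t):t\in X,\ r\in\operatorname{Sp}_t(X)\}$. A map $F:X\to Y$ between metric spaces preserves balls if $F(Z)\in\mathbf B_Y$ for every $Z\in\mathbf B_X$ and $F^{-1}(W)\in\mathbf B_X$ for every $W\in\mathbf B_Y$. For a finite ultrametric space $X$ (with $X\cap\operatorname{Sp}(X)=\varnothing$, achievable up to isometry), the representing tree $T_X$ is the labelled rooted tree defined recursively: for $X=\{x\}$ a single node labelled $x$; for $|X|\ge2$ the root is labelled $\operatorname{diam}X$ and has one child for each class $X_i$ of the equivalence relation $x\sim y\iff d(x,y)<\operatorname{diam}X$, labelled $x$ if $X_i=\{x\}$ and otherwise labelled $\operatorname{diam}X_i$ with the recursively constructed tree for $X_i$ below it. $\overline{T}_X$ is $T_X$ with labels erased, and $X\cong Y$ means $\overline T_X$ and $\overline T_Y$ are isomorphic rooted trees. *)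

theory Defs
  imports Complex_Main
begin

definition ultrametric_on :: "'a set \<Rightarrow> ('a \<Rightarrow> 'a \<Rightarrow> real) \<Rightarrow> bool" where
  "ultrametric_on X d \<longleftrightarrow>
     (\<forall>x\<in>X. \<forall>y\<in>X. d x y \<ge> 0 \<and> (d x y = 0 \<longleftrightarrow> x = y) \<and> d x y = d y x) \<and>
     (\<forall>x\<in>X. \<forall>y\<in>X. \<forall>z\<in>X. d x z \<le> max (d x y) (d y z))"

definition Sp :: "'a set \<Rightarrow> ('a \<Rightarrow> 'a \<Rightarrow> real) \<Rightarrow> real set" where
  "Sp X d = {d x y | x y. x \<in> X \<and> y \<in> X \<and> x \<noteq> y}"

definition in_U :: "'a set \<Rightarrow> ('a \<Rightarrow> 'a \<Rightarrow> real) \<Rightarrow> bool" where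
  "in_U X d \<longleftrightarrow> X \<noteq> {} \<and> finite X \<and> ultrametric_on X d \<and> card (Sp X d) = card X - 1"

definition ball :: "'a set \<Rightarrow> ('a \<Rightarrow> 'a \<Rightarrow> real) \<Rightarrow> real \<Rightarrow> 'a \<Rightarrow> 'a set" where
  "ball X d r t = {x \<in> X. d x t \<le> r}"

definition Sp_at :: "'a set \<Rightarrow> ('a \<Rightarrow> 'a \<Rightarrow> real) \<Rightarrow> 'a \<Rightarrow> real set" where
  "Sp_at X d t = {d x t | x. x \<in> X \<and> x \<noteq> t}"

definition Balls :: "'a set \<Rightarrow> ('a \<Rightarrow> 'a \<Rightarrow> real) \<Rightarrow> 'a set set" where
  "Balls X d = {ball X d r t | t r. t \<in> X \<and> r \<in> Sp_at X d t}"

definition preserves_balls ::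
  "'a set \<Rightarrow> ('a \<Rightarrow> 'a \<Rightarrow> real) \<Rightarrow> 'b set \<Rightarrow> ('b \<Rightarrow> 'b \<Rightarrow> real) \<Rightarrow> ('a \<Rightarrow> 'b) \<Rightarrow> bool" where
  "preserves_balls X d Y \<rho> F \<longleftrightarrow>
     (\<forall>Z\<in>Balls X d. F ` Z \<in> Balls Y \<rho>) \<and> (\<forall>W\<in>Balls Y \<rho>. F -` W \<inter> X \<in> Balls X d)"

definition diam_fin :: "('a \<Rightarrow> 'a \<Rightarrow> real) \<Rightarrow> 'a set \<Rightarrow> real" where
  "diam_fin d Z = Max {d x y | x y. x \<in> Z \<and> y \<in> Z}"

text \<open>Nodes of the tree are identified with the subsets of X they represent (labels erased).\<close>
definition rt_children :: "('a \<Rightarrow> 'a \<Rightarrow> real) \<Rightarrow> 'a set \<Rightarrow> 'a set set" where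
  "rt_children d Z =
     (if card Z \<ge> 2 then Z // {(x, y). x \<in> Z \<and> y \<in> Z \<and> d x y < diam_fin d Z} else {})"

inductive_set rt_nodes :: "'a set \<Rightarrow> ('a \<Rightarrow> 'a \<Rightarrow> real) \<Rightarrow> 'a set set" for X d where
  root: "X \<in> rt_nodes X d"
| child: "Z \<in> rt_nodes X d \<Longrightarrow> W \<in> rt_children d Z \<Longrightarrow> W \<in> rt_nodes X d"

text \<open>X \<cong> Y: the unlabelled representing trees are isomorphic as rooted trees.\<close>
definition tree_iso ::
  "'a set \<Rightarrow> ('a \<Rightarrow> 'a \<Rightarrow> real) \<Rightarrow> 'b set \<Rightarrow> ('b \<Rightarrow> 'b \<Rightarrow> real) \<Rightarrow> bool" where
  "tree_iso X d Y \<rho> \<longleftrightarrow> (\<exists>\<phi>. bij_betw \<phi> (rt_nodes X d) (rt_nodes Y \<rho>) \<and> \<phi> X = Y \<and>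
     (\<forall>A\<in>rt_nodes X d. \<forall>B\<in>rt_nodes X d. B \<in> rt_children d A \<longleftrightarrow> \<phi> B \<in> rt_children \<rho> (\<phi> A)))"

end

theory Submission
  imports Defs
begin

lemma children_sub: "B \<in> rt_children d A \<Longrightarrow> B \<subseteq> A"
  unfolding rt_children_def quotient_def by (auto split: if_splits)

lemma children_eq: "2 \<le> card Z \<Longrightarrow> rt_children d Z = (\<lambda>s. {y\<in>Z. d s y < diam_fin d Z}) ` Z"
  unfolding rt_children_def quotient_def by auto

lemma G1: "W \<in> rt_nodes Z d \<Longrightarrow> Z \<in> rt_nodes X d \<Longrightarrow> W \<in> rt_nodes X d"
  by (induction rule: rt_nodes.induct) (auto intro: rt_nodes.child)

lemma G2: "W \<in> rt_nodes Z d \<Longrightarrow> W \<subseteq> Z"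
  by (induction rule: rt_nodes.induct) (auto dest: children_sub)

locale fum =
  fixes X :: "'a set" and d :: "'a \<Rightarrow> 'a \<Rightarrow> real"
  assumes fin: "finite X" and ne: "X \<noteq> {}" and um: "ultrametric_on X d"
begin

lemma d0: "x \<in> X \<Longrightarrow> y \<in> X \<Longrightarrow> d x y \<ge> 0" using um unfolding ultrametric_on_def by blast
lemma deq0: "x \<in> X \<Longrightarrow> y \<in> X \<Longrightarrow> d x y = 0 \<longleftrightarrow> x = y" using um unfolding ultrametric_on_def by blast
lemma dsym: "x \<in> X \<Longrightarrow> y \<in> X \<Longrightarrow> d x y = d y x" using um unfolding ultrametric_on_def by blast
lemma dtri: "x \<in> X \<Longrightarrow> y \<in> X \<Longrightarrow> z \<in> X \<Longrightarrow> d x z \<le> max (d x y) (d y z)"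
  using um unfolding ultrametric_on_def by blast

lemma dset_fin: "finite Z \<Longrightarrow> finite {d x y | x y. x \<in> Z \<and> y \<in> Z}"
proof -
  assume "finite Z"
  have "{d x y | x y. x \<in> Z \<and> y \<in> Z} = (\<lambda>(x,y). d x y) ` (Z \<times> Z)" by auto
  thus ?thesis using \<open>finite Z\<close> by simp
qed

lemma D1: "finite Z \<Longrightarrow> x\<in>Z \<Longrightarrow> y\<in>Z \<Longrightarrow> d x y \<le> diam_fin d Z"
  unfolding diam_fin_def by (rule Max_ge) (auto simp: dset_fin)

lemma D2: "finite Z \<Longrightarrow> Z \<noteq> {} \<Longrightarrow> \<exists>x\<in>Z. \<exists>y\<in>Z. diam_fin d Z = d x y"
proof -
  assume a: "finite Z" "Z \<noteq> {}"
  have "diam_fin d Z \<in> {d x y | x y. x \<in> Z \<and> y \<in> Z}"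
    unfolding diam_fin_def by (rule Max_in) (use a dset_fin in auto)
  thus ?thesis by auto
qed

lemma D3: "Z \<subseteq> X \<Longrightarrow> finite Z \<Longrightarrow> t\<in>Z \<Longrightarrow> \<exists>y\<in>Z. d y t = diam_fin d Z"
proof -
  assume a: "Z \<subseteq> X" "finite Z" "t \<in> Z"
  then obtain x y where xy: "x \<in> Z" "y \<in> Z" "diam_fin d Z = d x y" using D2 by blast
  have "d x y \<le> max (d x t) (d t y)" using dtri a xy by auto
  moreover have "d x t \<le> diam_fin d Z" by (rule D1[OF a(2) xy(1) a(3)])
  moreover have "d y t \<le> diam_fin d Z" by (rule D1[OF a(2) xy(2) a(3)])
  moreover have "d t y = d y t" using dsym a xy by auto
  ultimately show ?thesis using xy by (metis antisym max_def)
qed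

lemma D4: "Z \<subseteq> X \<Longrightarrow> finite Z \<Longrightarrow> 2 \<le> card Z \<Longrightarrow> diam_fin d Z > 0"
proof -
  assume a: "Z \<subseteq> X" "finite Z" "2 \<le> card Z"
  have "\<not> (\<forall>a\<in>Z. \<forall>b\<in>Z. a = b)"
  proof
    assume "\<forall>a\<in>Z. \<forall>b\<in>Z. a = b"
    hence "card Z \<le> Suc 0" using card_le_Suc0_iff_eq[OF a(2)] by blast
    thus False using a(3) by simp
  qed
  then obtain x y where "x \<in> Z" "y \<in> Z" "x \<noteq> y" by blast
  moreover have "x \<in> X" "y \<in> X" using a calculation by auto
  moreover have "d x y \<ge> 0" "d x y \<noteq> 0" using d0 deq0 calculation by auto
  moreover have "d x y \<le> diam_fin d Z" using D1[OF a(2)] calculation by blast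
  ultimately show ?thesis by linarith
qed

lemma single_diam: "finite Z \<Longrightarrow> card Z < 2 \<Longrightarrow> Z \<subseteq> X \<Longrightarrow> t \<in> Z \<Longrightarrow> Z = {t} \<and> diam_fin d Z = 0"
proof -
  assume a: "finite Z" "card Z < 2" "Z \<subseteq> X" "t \<in> Z"
  hence "card Z \<le> Suc 0" by simp
  hence "\<forall>a\<in>Z. \<forall>b\<in>Z. a = b" using card_le_Suc0_iff_eq[OF a(1)] by blast
  hence Z: "Z = {t}" using a(4) by blast
  moreover have "d t t = 0" using deq0 a by auto
  ultimately show ?thesis unfolding diam_fin_def by simp
qed

lemma mem_ball_eq: "A = ball X d r t \<Longrightarrow> y \<in> A \<longleftrightarrow> y \<in> X \<and> d y t \<le> r"
  by (simp add: ball_def)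

lemma node_ball: "A \<in> rt_nodes X d \<Longrightarrow> A \<subseteq> X \<and> A \<noteq> {} \<and> (\<forall>t\<in>A. A = ball X d (diam_fin d A) t)"
proof (induction rule: rt_nodes.induct)
  case root
  show ?case using ne D1[OF fin] by (auto simp: ball_def)
next
  case (child Z W)
  hence Z: "Z \<subseteq> X" "Z \<noteq> {}" by auto
  have Zm: "\<And>t y. t\<in>Z \<Longrightarrow> y \<in> Z \<longleftrightarrow> y \<in> X \<and> d y t \<le> diam_fin d Z"
  proof -
    fix t y assume "t \<in> Z"
    hence "Z = ball X d (diam_fin d Z) t" using child.IH by blast
    thus "y \<in> Z \<longleftrightarrow> y \<in> X \<and> d y t \<le> diam_fin d Z" by (rule mem_ball_eq)
  qed
  have fZ: "finite Z" using finite_subset[OF Z(1) fin] .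
  have c2: "2 \<le> card Z" using child.hyps(2) unfolding rt_children_def by (auto split: if_splits)
  then obtain s where s: "s \<in> Z" and W: "W = {y\<in>Z. d s y < diam_fin d Z}"
    using child.hyps(2) children_eq by blast
  define D where "D = diam_fin d Z"
  have Dpos: "D > 0" using D4 Z fZ c2 D_def by auto
  have sX: "s \<in> X" using s Z by auto
  have sW: "s \<in> W" using W s Dpos deq0[OF sX sX] D_def by auto
  have WX: "W \<subseteq> X" using W Z by auto
  have fW: "finite W" using WX fin finite_subset by auto
  have diamW: "diam_fin d W < D"
  proof -
    obtain a b where ab: "a \<in> W" "b \<in> W" "diam_fin d W = d a b" using D2[OF fW] sW by blast
    have "a \<in> X" "b \<in> X" using ab WX by auto
    hence "d a b \<le> max (d a s) (d s b)" "d a s = d s a" using dtri[of a s b] dsym[of a s] sX by auto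
    moreover have "d s a < D" "d s b < D" using ab W D_def by auto
    ultimately show ?thesis using ab by linarith
  qed
  show ?case
  proof (intro conjI ballI)
    show "W \<subseteq> X" by fact
    show "W \<noteq> {}" using sW by auto
    fix t assume tW: "t \<in> W"
    have tX: "t \<in> X" and tZ: "t \<in> Z" and st: "d s t < D" using tW WX W D_def by auto
    show "W = ball X d (diam_fin d W) t"
    proof
      show "W \<subseteq> ball X d (diam_fin d W) t" using D1[OF fW _ tW] WX by (auto simp: ball_def)
    next
      show "ball X d (diam_fin d W) t \<subseteq> W"
      proof
        fix y assume "y \<in> ball X d (diam_fin d W) t"
        hence yX: "y \<in> X" and yt: "d y t \<le> diam_fin d W" by (auto simp: ball_def)
        hence yt': "d y t < D" using diamW by linarith
        hence "y \<in> Z" using Zm[OF tZ] yX D_def by simp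
        moreover have "d s y \<le> max (d s t) (d t y)" "d t y = d y t" using dtri dsym sX tX yX by auto
        ultimately show "y \<in> W" using W D_def st yt' by auto
      qed
    qed
  qed
qed

lemma node_sub: "A \<in> rt_nodes X d \<Longrightarrow> A \<subseteq> X" using node_ball by blast
lemma node_ne: "A \<in> rt_nodes X d \<Longrightarrow> A \<noteq> {}" using node_ball by blast
lemma node_fin: "A \<in> rt_nodes X d \<Longrightarrow> finite A" using node_sub fin finite_subset by blast
lemma node_eq: "A \<in> rt_nodes X d \<Longrightarrow> t \<in> A \<Longrightarrow> A = ball X d (diam_fin d A) t" using node_ball by blast
lemma node_mem: "A \<in> rt_nodes X d \<Longrightarrow> t \<in> A \<Longrightarrow> y \<in> A \<longleftrightarrow> y \<in> X \<and> d y t \<le> diam_fin d A"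
  by (rule mem_ball_eq, rule node_eq)

lemma ball_node: "Z \<in> rt_nodes X d \<Longrightarrow> t \<in> Z \<Longrightarrow> 0 \<le> r \<Longrightarrow> r \<le> diam_fin d Z \<Longrightarrow> ball X d r t \<in> rt_nodes X d"
proof (induction "card Z" arbitrary: Z rule: less_induct)
  case less
  define D where "D = diam_fin d Z"
  have fZ: "finite Z" and ZX: "Z \<subseteq> X" using less.prems node_fin node_sub by auto
  have tX: "t \<in> X" using ZX less.prems by auto
  show ?case
  proof (cases "r = D")
    case True
    have "ball X d (diam_fin d Z) t = Z" using node_eq[OF less.prems(1,2)] by (rule sym)
    thus ?thesis using True less.prems(1) D_def by simp
  next
    case False
    hence rD: "r < D" using less.prems D_def by auto
    have c2: "2 \<le> card Z"
    proof (rule ccontr)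
      assume "\<not> 2 \<le> card Z"
      hence "diam_fin d Z = 0" using single_diam fZ ZX less.prems(2) by auto
      thus False using rD less.prems(3) D_def by auto
    qed
    define W where "W = {y\<in>Z. d t y < D}"
    have Wc: "W \<in> rt_children d Z" using children_eq[OF c2] less.prems(2) W_def D_def by auto
    have Wn: "W \<in> rt_nodes X d" using rt_nodes.child[OF less.prems(1) Wc] .
    have Dpos: "D > 0" using D4 ZX fZ c2 D_def by auto
    have tW: "t \<in> W" using W_def less.prems(2) Dpos deq0[OF tX tX] by auto
    obtain y where y: "y \<in> Z" "d y t = D" using D3[OF ZX fZ less.prems(2)] D_def by auto
    have "d t y = D" using y dsym ZX tX by auto
    hence "y \<notin> W" using W_def by auto
    hence "W \<subset> Z" using y W_def by auto
    hence cW: "card W < card Z" using fZ psubset_card_mono by auto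
    show ?thesis
    proof (cases "diam_fin d W \<le> r")
      case True
      have "ball X d r t = W"
      proof
        show "ball X d r t \<subseteq> W"
        proof
          fix y assume "y \<in> ball X d r t"
          hence yX: "y \<in> X" and yr: "d y t \<le> r" by (auto simp: ball_def)
          hence "y \<in> Z" using node_mem[OF less.prems(1,2)] rD D_def by simp
          moreover have "d t y = d y t" using dsym yX tX by auto
          ultimately show "y \<in> W" using W_def yr rD by auto
        qed
      next
        show "W \<subseteq> ball X d r t" using node_mem[OF Wn tW] True by (auto simp: ball_def)
      qed
      thus ?thesis using Wn by simp
    next
      case False
      thus ?thesis using less.hyps[OF cW Wn tW less.prems(3)] by simp
    qed
  qed
qed

lemma single_node: "x \<in> X \<Longrightarrow> {x} \<in> rt_nodes X d"
proof -
  assume x: "x \<in> X"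
  have "ball X d 0 x = {x}"
  proof
    show "ball X d 0 x \<subseteq> {x}"
    proof
      fix y assume "y \<in> ball X d 0 x"
      hence "y \<in> X" "d y x \<le> 0" by (auto simp: ball_def)
      thus "y \<in> {x}" using d0[OF _ x] deq0[OF _ x] by force
    qed
    show "{x} \<subseteq> ball X d 0 x" using x deq0[OF x x] by (auto simp: ball_def)
  qed
  moreover have "0 \<le> diam_fin d X" using D1[OF fin x x] deq0[OF x x] by simp
  ultimately show ?thesis using ball_node[OF rt_nodes.root x order_refl] by metis
qed

lemma Balls_eq: "Balls X d = {A \<in> rt_nodes X d. 2 \<le> card A}"
proof
  show "Balls X d \<subseteq> {A \<in> rt_nodes X d. 2 \<le> card A}"
  proof
    fix A assume "A \<in> Balls X d"
    then obtain t x where t: "t \<in> X" "x \<in> X" "x \<noteq> t" and A: "A = ball X d (d x t) t"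
      unfolding Balls_def Sp_at_def by auto
    have "A \<in> rt_nodes X d" using A ball_node[OF rt_nodes.root t(1) d0[OF t(2,1)] D1[OF fin t(2,1)]] by simp
    moreover have "{x, t} \<subseteq> A" using A t deq0[OF t(1) t(1)] d0[OF t(2) t(1)] by (auto simp: ball_def)
    moreover have "card {x, t} = 2" using t(3) by simp
    ultimately have "2 \<le> card A" using card_mono[OF node_fin] by metis
    thus "A \<in> {A \<in> rt_nodes X d. 2 \<le> card A}" using \<open>A \<in> rt_nodes X d\<close> by simp
  qed
next
  show "{A \<in> rt_nodes X d. 2 \<le> card A} \<subseteq> Balls X d"
  proof
    fix A assume "A \<in> {A \<in> rt_nodes X d. 2 \<le> card A}"
    hence An: "A \<in> rt_nodes X d" and c: "2 \<le> card A" by auto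
    obtain t where t: "t \<in> A" using node_ne[OF An] by auto
    obtain y where y: "y \<in> A" "d y t = diam_fin d A" using D3[OF node_sub[OF An] node_fin[OF An] t] by auto
    have "diam_fin d A > 0" using D4[OF node_sub[OF An] node_fin[OF An] c] .
    have yX: "y \<in> X" and tX0: "t \<in> X" using y t node_sub[OF An] by auto
    have "y \<noteq> t"
    proof
      assume "y = t"
      hence "d y t = 0" using deq0[OF yX tX0] by simp
      thus False using y(2) \<open>diam_fin d A > 0\<close> by simp
    qed
    have sp: "diam_fin d A \<in> Sp_at X d t" unfolding Sp_at_def
      by (rule CollectI, rule exI[of _ y]) (use y yX \<open>y \<noteq> t\<close> in auto)
    have tX: "t \<in> X" using t node_sub[OF An] by auto
    show "A \<in> Balls X d" unfolding Balls_def
      by (intro CollectI exI[of _ t] exI[of _ "diam_fin d A"] conjI node_eq[OF An t] tX sp)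
  qed
qed

lemma leaf_iff: "A \<in> rt_nodes X d \<Longrightarrow> rt_children d A = {} \<longleftrightarrow> card A < 2"
proof -
  assume A: "A \<in> rt_nodes X d"
  show ?thesis
  proof (cases "2 \<le> card A")
    case True
    hence "rt_children d A = (\<lambda>s. {y\<in>A. d s y < diam_fin d A}) ` A" by (rule children_eq)
    moreover have "A \<noteq> {}" using node_ne A by blast
    ultimately show ?thesis using True by simp
  next
    case False thus ?thesis unfolding rt_children_def by simp
  qed
qed

lemma small_single: "A \<in> rt_nodes X d \<Longrightarrow> card A < 2 \<Longrightarrow> \<exists>x\<in>X. A = {x}"
proof -
  assume A: "A \<in> rt_nodes X d" "card A < 2"
  obtain t where t: "t \<in> A" using node_ne[OF A(1)] by auto
  have "A = {t}" using single_diam[OF node_fin[OF A(1)] A(2) node_sub[OF A(1)] t] by blast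
  moreover have "t \<in> X" using t node_sub[OF A(1)] by auto
  ultimately show ?thesis by blast
qed

lemma B_in_child: "A \<in> rt_nodes X d \<Longrightarrow> B \<in> rt_nodes X d \<Longrightarrow> B \<subset> A \<Longrightarrow> t \<in> B \<Longrightarrow>
   B \<subseteq> {y\<in>A. d t y < diam_fin d A}"
proof -
  assume a: "A \<in> rt_nodes X d" "B \<in> rt_nodes X d" "B \<subset> A" "t \<in> B"
  have tA: "t \<in> A" using a by auto
  have "diam_fin d B < diam_fin d A"
  proof (rule ccontr)
    assume "\<not> ?thesis"
    hence "A \<subseteq> B" using node_mem[OF a(1) tA] node_mem[OF a(2) a(4)] by fastforce
    thus False using a(3) by auto
  qed
  moreover have "\<And>y. y \<in> B \<Longrightarrow> d t y = d y t \<and> d y t \<le> diam_fin d B"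
    using dsym node_sub[OF a(2)] a(4) D1[OF node_fin[OF a(2)] _ a(4)] by auto
  ultimately show ?thesis using a(3) by fastforce
qed

lemma card2: "A \<in> rt_nodes X d \<Longrightarrow> B \<in> rt_nodes X d \<Longrightarrow> B \<subset> A \<Longrightarrow> 2 \<le> card A"
proof (rule ccontr)
  assume a: "A \<in> rt_nodes X d" "B \<in> rt_nodes X d" "B \<subset> A" "\<not> 2 \<le> card A"
  then obtain x where "A = {x}" using small_single by force
  moreover have "B \<noteq> {}" using node_ne a by blast
  ultimately show False using a(3) by blast
qed

lemma sub_iff: "A \<in> rt_nodes X d \<Longrightarrow> B \<in> rt_nodes X d \<Longrightarrow> B \<subseteq> A \<longleftrightarrow> B \<in> rt_nodes A d"
proof
  assume "B \<in> rt_nodes A d" thus "B \<subseteq> A" by (rule G2)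
next
  assume a: "A \<in> rt_nodes X d" "B \<in> rt_nodes X d" "B \<subseteq> A"
  thus "B \<in> rt_nodes A d"
  proof (induction "card A" arbitrary: A rule: less_induct)
    case less
    show ?case
    proof (cases "B = A")
      case True thus ?thesis using rt_nodes.root by simp
    next
      case False
      hence ps: "B \<subset> A" using less.prems by auto
      have c2: "2 \<le> card A" using card2 less.prems ps by blast
      obtain t where t: "t \<in> B" using node_ne[OF less.prems(2)] by auto
      define W where "W = {y\<in>A. d t y < diam_fin d A}"
      have Wc: "W \<in> rt_children d A" using children_eq[OF c2] t ps W_def by auto
      have Wn: "W \<in> rt_nodes X d" using rt_nodes.child[OF less.prems(1) Wc] .
      have BW: "B \<subseteq> W" using B_in_child[OF less.prems(1,2) ps t] W_def by simp
      have "W \<noteq> A"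
      proof
        assume "W = A"
        obtain y where "y \<in> A" "d y t = diam_fin d A"
          using D3[OF node_sub[OF less.prems(1)] node_fin[OF less.prems(1)]] t ps by blast
        moreover have "d t y = d y t" using dsym node_sub[OF less.prems(1)] calculation(1) t ps by blast
        moreover have "y \<in> W" using \<open>W = A\<close> calculation(1) by simp
        ultimately show False using W_def by auto
      qed
      hence "card W < card A" using children_sub[OF Wc] node_fin[OF less.prems(1)] psubset_card_mono by blast
      hence "B \<in> rt_nodes W d" using less.hyps Wn less.prems(2) BW by blast
      moreover have "W \<in> rt_nodes A d" using rt_nodes.child[OF rt_nodes.root Wc] .
      ultimately show ?thesis using G1 by blast
    qed
  qed
qed

lemma cover_iff: "A \<in> rt_nodes X d \<Longrightarrow> B \<in> rt_nodes X d \<Longrightarrow>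
  B \<in> rt_children d A \<longleftrightarrow> (B \<subset> A \<and> (\<forall>C\<in>rt_nodes X d. B \<subseteq> C \<longrightarrow> C \<subseteq> A \<longrightarrow> C = B \<or> C = A))"
proof -
  assume a: "A \<in> rt_nodes X d" "B \<in> rt_nodes X d"
  have AX: "A \<subseteq> X" using node_sub a by auto
  show ?thesis
  proof
    assume a3: "B \<in> rt_children d A"
    have c2: "2 \<le> card A" using a3 unfolding rt_children_def by (auto split: if_splits)
    obtain s where s: "s \<in> A" and B: "B = {y\<in>A. d s y < diam_fin d A}"
      using children_eq[OF c2] a3 by blast
    obtain y where y: "y \<in> A" "d y s = diam_fin d A" using D3[OF AX node_fin[OF a(1)] s] by auto
    have sX: "s \<in> X" and yX: "y \<in> X" using AX s y by auto
    have "d s y = diam_fin d A" using dsym[OF sX yX] y(2) by simp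
    hence "y \<notin> B" using B by simp
    hence ps: "B \<subset> A" using y B by blast
    have "diam_fin d A > 0" using D4[OF AX node_fin[OF a(1)] c2] .
    moreover have "d s s = 0" using deq0[OF sX sX] by simp
    ultimately have sB: "s \<in> B" using B s by simp
    have "C = B \<or> C = A" if C: "C \<in> rt_nodes X d" "B \<subseteq> C" "C \<subseteq> A" for C
    proof (cases "C = A")
      case False
      hence "C \<subset> A" using C(3) by blast
      hence "C \<subseteq> {y\<in>A. d s y < diam_fin d A}" using B_in_child[OF a(1) C(1) _ ] C(2) sB by blast
      hence "C \<subseteq> B" using B by simp
      thus ?thesis using C(2) by blast
    qed simp
    thus "B \<subset> A \<and> (\<forall>C\<in>rt_nodes X d. B \<subseteq> C \<longrightarrow> C \<subseteq> A \<longrightarrow> C = B \<or> C = A)" using ps by blast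
  next
    assume h: "B \<subset> A \<and> (\<forall>C\<in>rt_nodes X d. B \<subseteq> C \<longrightarrow> C \<subseteq> A \<longrightarrow> C = B \<or> C = A)"
    have ps: "B \<subset> A" using h by blast
    have hc: "\<And>C. C \<in> rt_nodes X d \<Longrightarrow> B \<subseteq> C \<Longrightarrow> C \<subseteq> A \<Longrightarrow> C = B \<or> C = A" using h by blast
    have c2: "2 \<le> card A" using card2[OF a ps] .
    obtain t where t: "t \<in> B" using node_ne[OF a(2)] by auto
    have tA: "t \<in> A" using t ps by blast
    define W where "W = {y\<in>A. d t y < diam_fin d A}"
    have Wc: "W \<in> rt_children d A" unfolding children_eq[OF c2] W_def using tA by blast
    have Wn: "W \<in> rt_nodes X d" using rt_nodes.child[OF a(1) Wc] .
    have BW: "B \<subseteq> W" unfolding W_def by (rule B_in_child[OF a(1,2) ps t])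
    have WA: "W \<subseteq> A" unfolding W_def by blast
    have "W \<noteq> A"
    proof
      assume WA': "W = A"
      obtain y where y: "y \<in> A" "d y t = diam_fin d A"
        using D3[OF AX node_fin[OF a(1)] tA] by blast
      have tX: "t \<in> X" and yX: "y \<in> X" using AX tA y by auto
      have "d t y = diam_fin d A" using dsym[OF tX yX] y(2) by simp
      moreover have "y \<in> W" using WA' y(1) by simp
      ultimately show False unfolding W_def by simp
    qed
    hence "W = B" using hc[OF Wn BW WA] by blast
    thus "B \<in> rt_children d A" using Wc by simp
  qed
qed

end

lemma inj_on_img_sub: "inj_on f C \<Longrightarrow> A \<subseteq> C \<Longrightarrow> B \<subseteq> C \<Longrightarrow> f ` A \<subseteq> f ` B \<longleftrightarrow> A \<subseteq> B"
  unfolding inj_on_def by blast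

lemma ball_iff: "(\<And>x. x \<in> S \<Longrightarrow> P x = Q x) \<Longrightarrow> (\<forall>x\<in>S. P x) = (\<forall>x\<in>S. Q x)"
  by blast

lemma dir1:
  fixes X :: "'a set" and d :: "'a \<Rightarrow> 'a \<Rightarrow> real"
    and Y :: "'b set" and \<rho> :: "'b \<Rightarrow> 'b \<Rightarrow> real"
  assumes FX: "fum X d" and FY: "fum Y \<rho>"
    and bij: "bij_betw F X Y" and pb: "preserves_balls X d Y \<rho> F"
  shows "tree_iso X d Y \<rho>"
proof -
  interpret X: fum X d by fact
  interpret Y: fum Y \<rho> by fact
  let ?NX = "rt_nodes X d" and ?NY = "rt_nodes Y \<rho>"
  have inj: "inj_on F X" and FXY: "F ` X = Y" using bij by (auto simp: bij_betw_def)
  have img: "F ` A \<in> ?NY" if A: "A \<in> ?NX" for A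
  proof (cases "2 \<le> card A")
    case True
    hence "A \<in> Balls X d" unfolding X.Balls_eq using A by blast
    hence "F ` A \<in> Balls Y \<rho>" using pb unfolding preserves_balls_def by blast
    thus ?thesis unfolding Y.Balls_eq by blast
  next
    case False
    hence "card A < 2" by simp
    then obtain x where x: "x \<in> X" "A = {x}" using X.small_single[OF A] by blast
    have "F x \<in> Y" using x(1) FXY by blast
    hence "{F x} \<in> ?NY" by (rule Y.single_node)
    thus ?thesis using x(2) by simp
  qed
  have surj: "\<exists>A\<in>?NX. W = F ` A" if W: "W \<in> ?NY" for W
  proof (cases "2 \<le> card W")
    case True
    hence "W \<in> Balls Y \<rho>" unfolding Y.Balls_eq using W by blast
    hence V: "F -` W \<inter> X \<in> Balls X d" using pb unfolding preserves_balls_def by blast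
    have WY: "W \<subseteq> Y" by (rule Y.node_sub[OF W])
    have "F ` (F -` W \<inter> X) = W"
    proof
      show "F ` (F -` W \<inter> X) \<subseteq> W" by blast
      show "W \<subseteq> F ` (F -` W \<inter> X)"
      proof
        fix y assume "y \<in> W"
        hence "y \<in> F ` X" using WY FXY by blast
        then obtain x where "x \<in> X" "y = F x" by blast
        thus "y \<in> F ` (F -` W \<inter> X)" using \<open>y \<in> W\<close> by blast
      qed
    qed
    moreover have "F -` W \<inter> X \<in> ?NX" using V unfolding X.Balls_eq by blast
    ultimately show ?thesis by (intro bexI[of _ "F -` W \<inter> X"]) simp_all
  next
    case False
    hence "card W < 2" by simp
    then obtain y where y: "y \<in> Y" "W = {y}" using Y.small_single[OF W] by blast
    then obtain x where x: "x \<in> X" "y = F x" using FXY by blast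
    have "{x} \<in> ?NX" by (rule X.single_node[OF x(1)])
    moreover have "W = F ` {x}" using y(2) x(2) by simp
    ultimately show ?thesis by blast
  qed
  have sub: "F ` A \<subseteq> F ` B \<longleftrightarrow> A \<subseteq> B" if "A \<in> ?NX" "B \<in> ?NX" for A B
    by (rule inj_on_img_sub[OF inj X.node_sub[OF that(1)] X.node_sub[OF that(2)]])
  have eq: "F ` A = F ` B \<longleftrightarrow> A = B" if "A \<in> ?NX" "B \<in> ?NX" for A B
    by (rule inj_on_image_eq_iff[OF inj X.node_sub[OF that(1)] X.node_sub[OF that(2)]])
  have injN: "inj_on (\<lambda>A. F ` A) ?NX"
  proof (rule inj_onI)
    fix A B assume "A \<in> ?NX" "B \<in> ?NX" "F ` A = F ` B"
    thus "A = B" using eq by blast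
  qed
  have NY: "?NY = (\<lambda>A. F ` A) ` ?NX"
  proof
    show "?NY \<subseteq> (\<lambda>A. F ` A) ` ?NX"
    proof
      fix W assume "W \<in> ?NY"
      then obtain A where "A \<in> ?NX" "W = F ` A" using surj by blast
      thus "W \<in> (\<lambda>A. F ` A) ` ?NX" by blast
    qed
    show "(\<lambda>A. F ` A) ` ?NX \<subseteq> ?NY" using img by blast
  qed
  have ch: "B \<in> rt_children d A \<longleftrightarrow> F ` B \<in> rt_children \<rho> (F ` A)" if AB: "A \<in> ?NX" "B \<in> ?NX" for A B
  proof -
    have ps: "(B \<subset> A) = (F ` B \<subset> F ` A)"
      by (simp only: psubset_eq sub[OF AB(2,1)] eq[OF AB(2,1)])
    have bc: "((B \<subseteq> C \<longrightarrow> C \<subseteq> A \<longrightarrow> C = B \<or> C = A) =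
              (F ` B \<subseteq> F ` C \<longrightarrow> F ` C \<subseteq> F ` A \<longrightarrow> F ` C = F ` B \<or> F ` C = F ` A))" if C: "C \<in> ?NX" for C
      by (simp only: sub[OF AB(2) C] sub[OF C AB(1)] eq[OF C AB(2)] eq[OF C AB(1)])
    have bi: "(\<forall>C\<in>?NX. F ` B \<subseteq> F ` C \<longrightarrow> F ` C \<subseteq> F ` A \<longrightarrow> F ` C = F ` B \<or> F ` C = F ` A) =
              (\<forall>C\<in>?NY. F ` B \<subseteq> C \<longrightarrow> C \<subseteq> F ` A \<longrightarrow> C = F ` B \<or> C = F ` A)"
    proof
      assume h: "\<forall>C\<in>?NY. F ` B \<subseteq> C \<longrightarrow> C \<subseteq> F ` A \<longrightarrow> C = F ` B \<or> C = F ` A"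
      show "\<forall>C\<in>?NX. F ` B \<subseteq> F ` C \<longrightarrow> F ` C \<subseteq> F ` A \<longrightarrow> F ` C = F ` B \<or> F ` C = F ` A"
      proof
        fix C assume "C \<in> ?NX"
        hence "F ` C \<in> ?NY" by (rule img)
        thus "F ` B \<subseteq> F ` C \<longrightarrow> F ` C \<subseteq> F ` A \<longrightarrow> F ` C = F ` B \<or> F ` C = F ` A" by (rule bspec[OF h])
      qed
    next
      assume h: "\<forall>C\<in>?NX. F ` B \<subseteq> F ` C \<longrightarrow> F ` C \<subseteq> F ` A \<longrightarrow> F ` C = F ` B \<or> F ` C = F ` A"
      show "\<forall>C\<in>?NY. F ` B \<subseteq> C \<longrightarrow> C \<subseteq> F ` A \<longrightarrow> C = F ` B \<or> C = F ` A"
      proof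
        fix W assume "W \<in> ?NY"
        then obtain C where C: "C \<in> ?NX" "W = F ` C" using surj by blast
        have "F ` B \<subseteq> F ` C \<longrightarrow> F ` C \<subseteq> F ` A \<longrightarrow> F ` C = F ` B \<or> F ` C = F ` A" by (rule bspec[OF h C(1)])
        thus "F ` B \<subseteq> W \<longrightarrow> W \<subseteq> F ` A \<longrightarrow> W = F ` B \<or> W = F ` A" using C(2) by simp
      qed
    qed
    have "B \<in> rt_children d A \<longleftrightarrow> (B \<subset> A \<and> (\<forall>C\<in>?NX. B \<subseteq> C \<longrightarrow> C \<subseteq> A \<longrightarrow> C = B \<or> C = A))"
      by (rule X.cover_iff[OF AB])
    also have "\<dots> \<longleftrightarrow> (F ` B \<subset> F ` A \<and> (\<forall>C\<in>?NX. F ` B \<subseteq> F ` C \<longrightarrow> F ` C \<subseteq> F ` A \<longrightarrow> F ` C = F ` B \<or> F ` C = F ` A))"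
      by (rule conj_cong[OF ps]) (rule ball_iff, rule bc, assumption)
    also have "\<dots> \<longleftrightarrow> (F ` B \<subset> F ` A \<and> (\<forall>C\<in>?NY. F ` B \<subseteq> C \<longrightarrow> C \<subseteq> F ` A \<longrightarrow> C = F ` B \<or> C = F ` A))"
      by (simp only: bi)
    also have "\<dots> \<longleftrightarrow> F ` B \<in> rt_children \<rho> (F ` A)"
      by (rule Y.cover_iff[OF img[OF AB(1)] img[OF AB(2)], symmetric])
    finally show ?thesis .
  qed
  show ?thesis unfolding tree_iso_def
  proof (rule exI[of _ "\<lambda>A. F ` A"], intro conjI)
    show "bij_betw (\<lambda>A. F ` A) ?NX ?NY" unfolding bij_betw_def using injN NY by simp
    show "F ` X = Y" by (rule FXY)
    show "\<forall>A\<in>?NX. \<forall>B\<in>?NX. B \<in> rt_children d A \<longleftrightarrow> F ` B \<in> rt_children \<rho> (F ` A)"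
      using ch by blast
  qed
qed

lemma dir2:
  fixes X :: "'a set" and d :: "'a \<Rightarrow> 'a \<Rightarrow> real"
    and Y :: "'b set" and \<rho> :: "'b \<Rightarrow> 'b \<Rightarrow> real"
  assumes FX: "fum X d" and FY: "fum Y \<rho>" and ti: "tree_iso X d Y \<rho>"
  shows "\<exists>F. bij_betw F X Y \<and> preserves_balls X d Y \<rho> F"
proof -
  interpret X: fum X d by fact
  interpret Y: fum Y \<rho> by fact
  let ?NX = "rt_nodes X d" and ?NY = "rt_nodes Y \<rho>"
  obtain \<phi> where bphi: "bij_betw \<phi> ?NX ?NY" and root: "\<phi> X = Y"
    and ch: "\<And>A B. A \<in> ?NX \<Longrightarrow> B \<in> ?NX \<Longrightarrow> B \<in> rt_children d A \<longleftrightarrow> \<phi> B \<in> rt_children \<rho> (\<phi> A)"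
    using ti unfolding tree_iso_def by blast
  have injp: "inj_on \<phi> ?NX" and imgp: "\<phi> ` ?NX = ?NY" using bphi by (auto simp: bij_betw_def)
  have inN: "\<phi> A \<in> ?NY" if "A \<in> ?NX" for A using imgp that by auto
  have P1: "\<phi> B \<in> rt_nodes (\<phi> A) \<rho>" if A: "A \<in> ?NX" and B: "B \<in> rt_nodes A d" for A B
    using B
  proof (induction rule: rt_nodes.induct)
    case root show ?case by (rule rt_nodes.root)
  next
    case (child Z W)
    have Z: "Z \<in> ?NX" using G1[OF child.hyps(1) A] .
    have W: "W \<in> ?NX" using rt_nodes.child[OF Z child.hyps(2)] .
    have "\<phi> W \<in> rt_children \<rho> (\<phi> Z)" using ch[OF Z W] child.hyps(2) by blast
    thus ?case by (rule rt_nodes.child[OF child.IH])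
  qed
  have P2: "\<forall>B\<in>?NX. \<phi> B = N \<longrightarrow> B \<in> rt_nodes A d" if A: "A \<in> ?NX" and N: "N \<in> rt_nodes (\<phi> A) \<rho>" for A N
    using N
  proof (induction rule: rt_nodes.induct)
    case root
    show ?case
    proof (intro ballI impI)
      fix B assume B: "B \<in> ?NX" "\<phi> B = \<phi> A"
      hence "B = A" using injp A by (meson inj_onD)
      thus "B \<in> rt_nodes A d" using rt_nodes.root by simp
    qed
  next
    case (child N' W)
    have N': "N' \<in> ?NY" using G1[OF child.hyps(1) inN[OF A]] .
    then obtain C where C: "C \<in> ?NX" "N' = \<phi> C" using imgp by auto
    have CA: "C \<in> rt_nodes A d" using child.IH C by blast
    show ?case
    proof (intro ballI impI)
      fix B assume B: "B \<in> ?NX" "\<phi> B = W"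
      hence "B \<in> rt_children d C" using ch[OF C(1) B(1)] child.hyps(2) C by simp
      thus "B \<in> rt_nodes A d" using rt_nodes.child[OF CA] by blast
    qed
  qed
  have sub: "B \<subseteq> A \<longleftrightarrow> \<phi> B \<subseteq> \<phi> A" if A: "A \<in> ?NX" and B: "B \<in> ?NX" for A B
  proof -
    have "B \<subseteq> A \<longleftrightarrow> B \<in> rt_nodes A d" using X.sub_iff A B by blast
    also have "\<dots> \<longleftrightarrow> \<phi> B \<in> rt_nodes (\<phi> A) \<rho>" using P1[OF A] P2[OF A] B by blast
    also have "\<dots> \<longleftrightarrow> \<phi> B \<subseteq> \<phi> A" using Y.sub_iff inN A B by blast
    finally show ?thesis .
  qed
  have leaf: "rt_children d A = {} \<longleftrightarrow> rt_children \<rho> (\<phi> A) = {}" if A: "A \<in> ?NX" for A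
  proof
    assume e: "rt_children d A = {}"
    show "rt_children \<rho> (\<phi> A) = {}"
    proof (rule ccontr)
      assume "rt_children \<rho> (\<phi> A) \<noteq> {}"
      then obtain W where W: "W \<in> rt_children \<rho> (\<phi> A)" by auto
      hence "W \<in> ?NY" using rt_nodes.child[OF inN[OF A]] by blast
      then obtain B where "B \<in> ?NX" "W = \<phi> B" using imgp by auto
      thus False using ch[OF A] W e by blast
    qed
  next
    assume e: "rt_children \<rho> (\<phi> A) = {}"
    show "rt_children d A = {}"
    proof (rule ccontr)
      assume "rt_children d A \<noteq> {}"
      then obtain B where B: "B \<in> rt_children d A" by auto
      hence "B \<in> ?NX" using rt_nodes.child[OF A] by blast
      thus False using ch[OF A] B e by blast
    qed
  qed
  have small: "card A < 2 \<longleftrightarrow> card (\<phi> A) < 2" if A: "A \<in> ?NX" for A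
  proof -
    have 1: "rt_children d A = {} \<longleftrightarrow> card A < 2" by (rule X.leaf_iff[OF A])
    have 2: "rt_children \<rho> (\<phi> A) = {} \<longleftrightarrow> card (\<phi> A) < 2" by (rule Y.leaf_iff[OF inN[OF A]])
    show ?thesis using 1 2 leaf[OF A] by blast
  qed
  have sing: "\<exists>y\<in>Y. \<phi> {x} = {y}" if x: "x \<in> X" for x
  proof -
    have "card {x} < 2" by simp
    hence "card (\<phi> {x}) < 2" using small[OF X.single_node[OF x]] by blast
    thus ?thesis using Y.small_single[OF inN[OF X.single_node[OF x]]] by blast
  qed
  define F where "F x = the_elem (\<phi> {x})" for x
  have Fx: "\<phi> {x} = {F x}" "F x \<in> Y" if xX: "x \<in> X" for x
  proof -
    obtain y where y: "y \<in> Y" "\<phi> {x} = {y}" using sing[OF xX] by blast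
    have "F x = y" unfolding F_def using y(2) by simp
    thus "\<phi> {x} = {F x}" "F x \<in> Y" using y by simp_all
  qed
  have FA: "F ` A = \<phi> A" if A: "A \<in> ?NX" for A
  proof
    show "F ` A \<subseteq> \<phi> A"
    proof
      fix y assume "y \<in> F ` A"
      then obtain x where x: "x \<in> A" "y = F x" by auto
      have xX: "x \<in> X" using x X.node_sub A by auto
      have "{x} \<subseteq> A" using x by auto
      hence "\<phi> {x} \<subseteq> \<phi> A" using sub[OF A X.single_node[OF xX]] by blast
      thus "y \<in> \<phi> A" using Fx[OF xX] x by auto
    qed
  next
    show "\<phi> A \<subseteq> F ` A"
    proof
      fix y assume y: "y \<in> \<phi> A"
      hence yY: "y \<in> Y" using Y.node_sub inN[OF A] by auto
      have "{y} \<in> ?NY" using Y.single_node[OF yY] .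
      hence "{y} \<in> \<phi> ` ?NX" using imgp by simp
      then obtain B where B: "B \<in> ?NX" "\<phi> B = {y}" by (auto elim!: imageE)
      have "card (\<phi> B) < 2" using B(2) by simp
      hence "card B < 2" using small[OF B(1)] by blast
      then obtain x where x: "x \<in> X" "B = {x}" using X.small_single[OF B(1)] by blast
      have "{F x} = {y}" using Fx(1)[OF x(1)] B(2) x(2) by simp
      hence "F x = y" by simp
      moreover have "\<phi> B \<subseteq> \<phi> A" using B(2) y by simp
      hence "B \<subseteq> A" using sub[OF A B(1)] by blast
      hence "{x} \<subseteq> A" using x(2) by simp
      ultimately show "y \<in> F ` A" by auto
    qed
  qed
  have injF: "inj_on F X"
  proof (rule inj_onI)
    fix x y assume "x \<in> X" "y \<in> X" "F x = F y"
    hence "\<phi> {x} = \<phi> {y}" using Fx(1)[OF \<open>x \<in> X\<close>] Fx(1)[OF \<open>y \<in> X\<close>] by simp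
    hence "{x} = {y}" using injp X.single_node \<open>x \<in> X\<close> \<open>y \<in> X\<close> by (meson inj_onD)
    thus "x = y" by simp
  qed
  have bF: "bij_betw F X Y" unfolding bij_betw_def using injF FA[OF rt_nodes.root] root by simp
  have pb: "preserves_balls X d Y \<rho> F"
    unfolding preserves_balls_def
  proof (intro conjI ballI)
    fix Z assume "Z \<in> Balls X d"
    hence Z: "Z \<in> ?NX" "2 \<le> card Z" using X.Balls_eq by auto
    hence "\<not> card (\<phi> Z) < 2" using small[OF Z(1)] by linarith
    thus "F ` Z \<in> Balls Y \<rho>" using FA[OF Z(1)] inN[OF Z(1)] Y.Balls_eq by auto
  next
    fix W assume "W \<in> Balls Y \<rho>"
    hence W: "W \<in> ?NY" "2 \<le> card W" using Y.Balls_eq by auto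
    then obtain Z where Z: "Z \<in> ?NX" "W = \<phi> Z" using imgp by auto
    hence "\<not> card (\<phi> Z) < 2" using W(2) by simp
    hence c: "2 \<le> card Z" using small[OF Z(1)] by linarith
    have ZX: "Z \<subseteq> X" using X.node_sub Z by auto
    have "F -` W \<inter> X = Z"
    proof
      show "Z \<subseteq> F -` W \<inter> X" using FA[OF Z(1)] Z ZX by auto
      show "F -` W \<inter> X \<subseteq> Z"
      proof
        fix x assume x: "x \<in> F -` W \<inter> X"
        hence "F x \<in> F ` Z" using FA[OF Z(1)] Z by auto
        then obtain z where "z \<in> Z" "F x = F z" by auto
        moreover have "x \<in> X" using x by blast
        ultimately show "x \<in> Z" using injF ZX by (metis inj_onD subsetD)
      qed
    qed
    thus "F -` W \<inter> X \<in> Balls X d" using X.Balls_eq Z c by auto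
  qed
  show ?thesis using bF pb by blast
qed

theorem theorem24:
  fixes X :: "'a set" and d :: "'a \<Rightarrow> 'a \<Rightarrow> real"
    and Y :: "'b set" and \<rho> :: "'b \<Rightarrow> 'b \<Rightarrow> real"
  assumes "in_U X d" and "in_U Y \<rho>"
  shows "tree_iso X d Y \<rho> \<longleftrightarrow> (\<exists>F. bij_betw F X Y \<and> preserves_balls X d Y \<rho> F)"
proof -
  have FX: "fum X d" using assms(1) unfolding in_U_def fum_def by blast
  have FY: "fum Y \<rho>" using assms(2) unfolding in_U_def fum_def by blast
  show ?thesis using dir1[OF FX FY] dir2[OF FX FY] by blast
qed

end
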